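(* Let $B$ be a noetherian normal integral domain and $A$ a subring of $B$. Suppose that $(\operatorname{Frac}A,\operatorname{Frac}B)\in\mathrm{EXT}$ and that there is a family $(f_i)_{i\in I}$ of elements of $A\setminus\{0\}$ such that $(A_{f_i},B_{f_i})\in\mathrm{EXT}$ for every $i\in I$ and no height-$1$ prime ideal of $B$ contains all the $f_i$. Then $(A,B)\in\mathrm{EXT}$.
   Context: For a ring $A$ and an $A$-algebra $B$, write $(A,B)\in\mathrm{EXT}$ to mean: for every derivation $\delta:A\to A$ there exists a unique derivation $D:B\to B$ such that $D\circ\varphi=\varphi\circ\delta$, where $\varphi:A\to B$ is the structure map. *)

theory Defs
  imports "HOL-Computational_Algebra.Polynomial_Factorial"
begin

text \<open>All rings below live inside one ambient commutative ring; structure maps are inclusions.\<close>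

definition is_subring :: "'a::comm_ring_1 set \<Rightarrow> bool" where
  "is_subring R \<longleftrightarrow> 0 \<in> R \<and> 1 \<in> R \<and>
     (\<forall>x\<in>R. \<forall>y\<in>R. x + y \<in> R \<and> x - y \<in> R \<and> x * y \<in> R)"

definition is_derivation :: "'a::comm_ring_1 set \<Rightarrow> ('a \<Rightarrow> 'a) \<Rightarrow> bool" where
  "is_derivation R d \<longleftrightarrow> (\<forall>x\<in>R. d x \<in> R) \<and>
     (\<forall>x\<in>R. \<forall>y\<in>R. d (x + y) = d x + d y \<and> d (x * y) = x * d y + y * d x)"

definition EXT :: "'a::comm_ring_1 set \<Rightarrow> 'a set \<Rightarrow> bool" where
  "EXT R S \<longleftrightarrow> (\<forall>\<delta>. is_derivation R \<delta> \<longrightarrow>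
     (\<exists>D. is_derivation S D \<and> (\<forall>x\<in>R. D x = \<delta> x) \<and>
        (\<forall>D'. is_derivation S D' \<and> (\<forall>x\<in>R. D' x = \<delta> x) \<longrightarrow> (\<forall>x\<in>S. D' x = D x))))"

text \<open>Fraction field of a subring A of a domain, realised inside the fraction field of the domain.\<close>
definition frac_sub :: "'a::idom set \<Rightarrow> 'a fract set" where
  "frac_sub A = {to_fract a / to_fract s | a s. a \<in> A \<and> s \<in> A \<and> s \<noteq> 0}"

text \<open>Localization A_f of a subring A at f, realised inside the fraction field.\<close>
definition loc_sub :: "'a::idom set \<Rightarrow> 'a \<Rightarrow> 'a fract set" where
  "loc_sub A f = {to_fract a / (to_fract f) ^ n | a n. a \<in> A}"

definition ring_ideal :: "'a::comm_ring_1 set \<Rightarrow> bool" where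
  "ring_ideal I \<longleftrightarrow> 0 \<in> I \<and> (\<forall>x\<in>I. \<forall>y\<in>I. x + y \<in> I) \<and> (\<forall>r. \<forall>x\<in>I. r * x \<in> I)"

definition prime_ideal :: "'a::comm_ring_1 set \<Rightarrow> bool" where
  "prime_ideal P \<longleftrightarrow> ring_ideal P \<and> P \<noteq> UNIV \<and> (\<forall>a b. a * b \<in> P \<longrightarrow> a \<in> P \<or> b \<in> P)"

definition height_one_prime :: "'a::comm_ring_1 set \<Rightarrow> bool" where
  "height_one_prime P \<longleftrightarrow> prime_ideal P \<and>
     (\<exists>Q. prime_ideal Q \<and> Q \<subset> P) \<and>
     \<not> (\<exists>Q0 Q1. prime_ideal Q0 \<and> prime_ideal Q1 \<and> Q0 \<subset> Q1 \<and> Q1 \<subset> P)"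

definition noetherian_ring :: "'a::comm_ring_1 itself \<Rightarrow> bool" where
  "noetherian_ring _ \<longleftrightarrow> (\<forall>I::'a set. ring_ideal I \<longrightarrow>
     (\<exists>F. finite F \<and> F \<subseteq> I \<and> I = {y. \<exists>r. y = (\<Sum>x\<in>F. r x * x)}))"

definition normal_domain :: "'a::idom itself \<Rightarrow> bool" where
  "normal_domain _ \<longleftrightarrow> (\<forall>x::'a fract. \<forall>p::'a poly.
     lead_coeff p = 1 \<and> poly (map_poly to_fract p) x = 0 \<longrightarrow> x \<in> range to_fract)"

end

theory Submission
  imports Defs
begin


definition locz :: "'k::field set \<Rightarrow> 'k set \<Rightarrow> 'k set" where
  "locz R M = {a / s | a s. a \<in> R \<and> s \<in> M}"

definition extd :: "'k::field set \<Rightarrow> 'k set \<Rightarrow> ('k \<Rightarrow> 'k) \<Rightarrow> 'k \<Rightarrow> 'k" where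
  "extd R M d z = (SOME v. \<exists>a s. a \<in> R \<and> s \<in> M \<and> z = a / s \<and> v = (d a - z * d s) / s)"

lemma der_one:
  assumes "is_derivation R d" "1 \<in> R" shows "d 1 = 0"
proof -
  have "d (1 * 1) = 1 * d 1 + 1 * d 1" using assms unfolding is_derivation_def by blast
  then show ?thesis by simp
qed

lemma der_quot:
  fixes D :: "'k::field \<Rightarrow> 'k"
  assumes "is_derivation T D" "s \<in> T" "z \<in> T" "s \<noteq> 0"
  shows "D (s * z) = s * D z + z * D s"
  using assms unfolding is_derivation_def by blast

lemma der_quot':
  fixes D :: "'k::field \<Rightarrow> 'k"
  assumes "is_derivation T D" "s \<in> T" "z \<in> T" "s \<noteq> 0"
  shows "D z = (D (s * z) - z * D s) / s"
  using der_quot[OF assms] assms(4) by (simp add: field_simps)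

lemma ext_welldef:
  fixes d :: "'k::field \<Rightarrow> 'k"
  assumes R: "is_subring R" and d: "is_derivation R d" and M: "M \<subseteq> R" "0 \<notin> M"
    and ab: "a \<in> R" "b \<in> R" "s \<in> M" "t \<in> M" and eq: "a / s = b / t"
  shows "(d a - (a / s) * d s) / s = (d b - (b / t) * d t) / t"
proof -
  have s0: "s \<noteq> 0" "t \<noteq> 0" using M ab by auto
  have st: "s \<in> R" "t \<in> R" using M ab by auto
  have e: "a * t = b * s" using eq s0 by (simp add: field_simps)
  have "d (a * t) = d (b * s)" using e by simp
  then have e2: "a * d t + t * d a = b * d s + s * d b"
    using d ab st unfolding is_derivation_def by metis
  have z1: "a / s * t = b" using eq s0 by (simp add: field_simps)
  have z2: "b / t * s = a" using eq s0 by (simp add: field_simps)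
  have "t * (d a - (a / s) * d s) = s * (d b - (b / t) * d t)"
  proof -
    have "t * (d a - (a / s) * d s) = t * d a - (a / s * t) * d s" by (simp add: algebra_simps)
    also have "\<dots> = t * d a - b * d s" using z1 by simp
    also have "\<dots> = s * d b - a * d t" using e2 by (simp add: algebra_simps)
    also have "\<dots> = s * d b - (b / t * s) * d t" using z2 by simp
    also have "\<dots> = s * (d b - (b / t) * d t)" by (simp add: algebra_simps)
    finally show ?thesis .
  qed
  then show ?thesis using s0 by (simp add: field_simps)
qed

lemma extd_eq:
  fixes d :: "'k::field \<Rightarrow> 'k"
  assumes R: "is_subring R" and d: "is_derivation R d" and M: "M \<subseteq> R" "0 \<notin> M"
    and a: "a \<in> R" "s \<in> M" "z = a / s"
  shows "extd R M d z = (d a - z * d s) / s"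
proof -
  have ex: "\<exists>v a s. a \<in> R \<and> s \<in> M \<and> z = a / s \<and> v = (d a - z * d s) / s" using a by blast
  have "\<exists>a s. a \<in> R \<and> s \<in> M \<and> z = a / s \<and> extd R M d z = (d a - z * d s) / s"
    unfolding extd_def by (rule someI_ex) (use ex in blast)
  then obtain a' s' where h: "a' \<in> R" "s' \<in> M" "z = a' / s'" "extd R M d z = (d a' - z * d s') / s'" by blast
  have eqz: "a' / s' = a / s" using h a by simp
  have w: "(d a' - (a' / s') * d s') / s' = (d a - (a / s) * d s) / s"
    by (rule ext_welldef[OF R d M h(1) a(1) h(2) a(2) eqz])
  have "extd R M d z = (d a' - (a' / s') * d s') / s'" using h(4) h(3) by simp
  also have "\<dots> = (d a - (a / s) * d s) / s" by (rule w)
  finally show ?thesis using a(3) by simp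
qed

lemma extd_der:
  fixes d :: "'k::field \<Rightarrow> 'k"
  assumes R: "is_subring R" and d: "is_derivation R d" and M: "M \<subseteq> R" "0 \<notin> M"
    and M1: "1 \<in> M" and Mm: "\<forall>s\<in>M. \<forall>t\<in>M. s * t \<in> M"
  shows "is_derivation (locz R M) (extd R M d)" and "\<forall>a\<in>R. extd R M d a = d a"
proof -
  have Rc: "\<And>x y. x \<in> R \<Longrightarrow> y \<in> R \<Longrightarrow> x + y \<in> R \<and> x - y \<in> R \<and> x * y \<in> R"
    using R unfolding is_subring_def by blast
  have dR: "\<And>x. x \<in> R \<Longrightarrow> d x \<in> R" using d unfolding is_derivation_def by blast
  have dadd: "\<And>x y. x \<in> R \<Longrightarrow> y \<in> R \<Longrightarrow> d (x + y) = d x + d y"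
    using d unfolding is_derivation_def by blast
  have dmul: "\<And>x y. x \<in> R \<Longrightarrow> y \<in> R \<Longrightarrow> d (x * y) = x * d y + y * d x"
    using d unfolding is_derivation_def by blast
  have MR: "\<And>s. s \<in> M \<Longrightarrow> s \<in> R" "\<And>s. s \<in> M \<Longrightarrow> s \<noteq> 0" using M by auto
  note E = extd_eq[OF R d M]
  show "\<forall>a\<in>R. extd R M d a = d a"
  proof
    fix a assume a: "a \<in> R"
    have "extd R M d a = (d a - a * d 1) / 1" by (rule E[OF a M1]) simp
    then show "extd R M d a = d a" using der_one[OF d MR(1)[OF M1]] by simp
  qed
  show "is_derivation (locz R M) (extd R M d)"
    unfolding is_derivation_def
  proof (intro conjI ballI)
    fix z assume "z \<in> locz R M"
    then obtain a s where h: "a \<in> R" "s \<in> M" "z = a / s" unfolding locz_def by blast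
    have "extd R M d z = (d a - z * d s) / s" by (rule E[OF h])
    also have "\<dots> = (d a * s - a * d s) / (s * s)"
      unfolding h(3) using MR[OF h(2)] by (simp add: field_simps)
    finally have "extd R M d z = (d a * s - a * d s) / (s * s)" .
    moreover have "d a * s - a * d s \<in> R"
    proof -
      have "d a \<in> R" "d s \<in> R" "s \<in> R" using dR h MR by auto
      then have "d a * s \<in> R" "a * d s \<in> R" using Rc h by auto
      then show ?thesis using Rc by blast
    qed
    moreover have "s * s \<in> M" using Mm h by blast
    ultimately show "extd R M d z \<in> locz R M" unfolding locz_def by blast
  next
    fix z1 z2 assume "z1 \<in> locz R M" "z2 \<in> locz R M"
    then obtain a s b t where h: "a \<in> R" "s \<in> M" "z1 = a / s" "b \<in> R" "t \<in> M" "z2 = b / t"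
      unfolding locz_def by blast
    have s0: "s \<noteq> 0" "t \<noteq> 0" "s \<in> R" "t \<in> R" using MR h by auto
    have st: "s * t \<in> M" using Mm h by blast
    have e1: "extd R M d z1 = (d a - z1 * d s) / s" using E h by blast
    have e2: "extd R M d z2 = (d b - z2 * d t) / t" using E h by blast
    have sum: "z1 + z2 = (a * t + b * s) / (s * t)" using h s0 by (simp add: field_simps)
    have prod: "z1 * z2 = (a * b) / (s * t)" using h s0 by simp
    have dst: "d (s * t) = s * d t + t * d s" using dmul s0 by blast
    have at: "a * t \<in> R" "b * s \<in> R" "a * b \<in> R" using Rc h s0 by auto
    have dsum: "d (a * t + b * s) = a * d t + t * d a + (b * d s + s * d b)"
      using dadd[OF at(1,2)] dmul[of a t] dmul[of b s] h s0 by simp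
    have dprod: "d (a * b) = a * d b + b * d a" using dmul h by blast
    have e3: "extd R M d (z1 + z2) = (d (a * t + b * s) - (z1 + z2) * d (s * t)) / (s * t)"
      using Rc at by (intro E[OF _ st sum]) auto
    have e4: "extd R M d (z1 * z2) = (d (a * b) - (z1 * z2) * d (s * t)) / (s * t)"
      by (rule E[OF at(3) st prod])
    show "extd R M d (z1 + z2) = extd R M d z1 + extd R M d z2"
    proof -
      have "(d (a * t + b * s) - (z1 + z2) * d (s * t)) / (s * t) = (d a - z1 * d s) / s + (d b - z2 * d t) / t"
        unfolding dsum dst h(3) h(6) using s0 by (simp add: field_simps)
      then show ?thesis using e1 e2 e3 by simp
    qed
    show "extd R M d (z1 * z2) = z1 * extd R M d z2 + z2 * extd R M d z1"
    proof -
      have "(d (a * b) - (z1 * z2) * d (s * t)) / (s * t) = z1 * ((d b - z2 * d t) / t) + z2 * ((d a - z1 * d s) / s)"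
        unfolding dprod dst h(3) h(6) using s0 by (simp add: field_simps)
      then show ?thesis using e1 e2 e4 by simp
    qed
  qed
qed



lemma ideal_sum_closed:
  assumes I: "ring_ideal I" and F: "finite F" "F \<subseteq> I"
  shows "(\<Sum>g\<in>F. r g * g) \<in> I"
  using F
proof (induction F rule: finite_induct)
  case empty then show ?case using I unfolding ring_ideal_def by simp
next
  case (insert g F)
  then have "r g * g \<in> I" "(\<Sum>g\<in>F. r g * g) \<in> I" using I unfolding ring_ideal_def by auto
  then show ?case using insert I unfolding ring_ideal_def by simp
qed

lemma int_lemma:
  fixes x :: "'b::idom fract" and q :: 'b
  assumes noeth: "noetherian_ring TYPE('b)" and norm: "normal_domain TYPE('b)"
    and q: "q \<noteq> 0" and cq: "\<forall>n. to_fract q * x ^ n \<in> range to_fract"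
  shows "x \<in> range to_fract"
proof -
  have "\<forall>n. \<exists>w. to_fract w = to_fract q * x ^ n" using cq by (metis image_iff rangeE)
  then obtain c where c: "\<And>n. to_fract (c n) = to_fract q * x ^ n" by metis
  define JN where "JN N = {y. \<exists>r. y = (\<Sum>k<N. r k * c k)}" for N
  define J where "J = (\<Union>N. JN N)"
  have mono: "JN N \<subseteq> JN M" if "N \<le> M" for N M
  proof
    fix y assume "y \<in> JN N"
    then obtain r where r: "y = (\<Sum>k<N. r k * c k)" unfolding JN_def by blast
    have "(\<Sum>k<M. (if k \<in> {..<N} then r k * c k else 0)) = (\<Sum>k\<in>{..<M} \<inter> {..<N}. r k * c k)"
      by (rule sum.inter_restrict[symmetric]) simp
    also have "{..<M} \<inter> {..<N} = {..<N}" using that by auto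
    moreover have "(\<Sum>k<M. (if k < N then r k else 0) * c k) = (\<Sum>k<M. (if k \<in> {..<N} then r k * c k else 0))"
      by (rule sum.cong) auto
    ultimately have eq: "y = (\<Sum>k<M. (if k < N then r k else 0) * c k)" using r by simp
    show "y \<in> JN M" unfolding JN_def by (rule CollectI, rule exI[of _ "\<lambda>k. if k < N then r k else 0"], rule eq)
  qed
  have JNid: "ring_ideal (JN N)" for N
    unfolding ring_ideal_def
  proof (intro conjI ballI allI)
    show "0 \<in> JN N" unfolding JN_def by (rule CollectI, rule exI[of _ "\<lambda>_. 0"]) simp
  next
    fix y z assume "y \<in> JN N" "z \<in> JN N"
    then obtain r1 r2 where "y = (\<Sum>k<N. r1 k * c k)" "z = (\<Sum>k<N. r2 k * c k)" unfolding JN_def by blast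
    then have eq: "y + z = (\<Sum>k<N. (r1 k + r2 k) * c k)" by (simp add: sum.distrib algebra_simps)
    show "y + z \<in> JN N" unfolding JN_def by (rule CollectI, rule exI[of _ "\<lambda>k. r1 k + r2 k"], rule eq)
  next
    fix s y assume "y \<in> JN N"
    then obtain r1 where "y = (\<Sum>k<N. r1 k * c k)" unfolding JN_def by blast
    then have eq: "s * y = (\<Sum>k<N. (s * r1 k) * c k)" by (simp add: sum_distrib_left algebra_simps)
    show "s * y \<in> JN N" unfolding JN_def by (rule CollectI, rule exI[of _ "\<lambda>k. s * r1 k"], rule eq)
  qed
  have Jid: "ring_ideal J"
    unfolding ring_ideal_def
  proof (intro conjI ballI allI)
    show "0 \<in> J" unfolding J_def using JNid unfolding ring_ideal_def by blast
  next
    fix y z assume "y \<in> J" "z \<in> J"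
    then obtain N1 N2 where "y \<in> JN N1" "z \<in> JN N2" unfolding J_def by blast
    then have "y \<in> JN (max N1 N2)" "z \<in> JN (max N1 N2)" using mono[of N1 "max N1 N2"] mono[of N2 "max N1 N2"] by auto
    then have "y + z \<in> JN (max N1 N2)" using JNid unfolding ring_ideal_def by blast
    then show "y + z \<in> J" unfolding J_def by blast
  next
    fix s y assume "y \<in> J"
    then obtain N1 where "y \<in> JN N1" unfolding J_def by blast
    then have "s * y \<in> JN N1" using JNid unfolding ring_ideal_def by blast
    then show "s * y \<in> J" unfolding J_def by blast
  qed
  have "\<exists>F. finite F \<and> F \<subseteq> J \<and> J = {y. \<exists>r. y = (\<Sum>x\<in>F. r x * x)}"
    using noeth[unfolded noetherian_ring_def, rule_format, OF Jid] .
  then obtain F where F: "finite F" "F \<subseteq> J" "J = {y. \<exists>r. y = (\<Sum>x\<in>F. r x * x)}"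
    by blast
  have "\<exists>N. F \<subseteq> JN N" using F(1,2)
  proof (induction F rule: finite_induct)
    case empty then show ?case by simp
  next
    case (insert g F)
    then obtain N where N: "F \<subseteq> JN N" by auto
    obtain Ng where Ng: "g \<in> JN Ng" using insert.prems unfolding J_def by blast
    have "F \<subseteq> JN (max N Ng)" "g \<in> JN (max N Ng)" using N Ng mono[of N "max N Ng"] mono[of Ng "max N Ng"] by auto
    then show ?case by blast
  qed
  then obtain N where N: "F \<subseteq> JN N" by blast
  have JsubN: "J \<subseteq> JN N"
  proof
    fix y assume "y \<in> J"
    then obtain r where "y = (\<Sum>x\<in>F. r x * x)" using F(3) by blast
    then show "y \<in> JN N" using ideal_sum_closed[OF JNid F(1) N, of r] by simp
  qed
  have "c N \<in> JN (Suc N)"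
  proof -
    have eq: "c N = (\<Sum>k<Suc N. (if k = N then 1 else 0) * c k)" by simp
    show ?thesis unfolding JN_def by (rule CollectI, rule exI[of _ "\<lambda>k. if k = N then 1 else 0"], rule eq)
  qed
  then have "c N \<in> JN N" using JsubN unfolding J_def by blast
  then obtain r where r: "c N = (\<Sum>k<N. r k * c k)" unfolding JN_def by blast
  have "to_fract q * x ^ N = (\<Sum>k<N. to_fract (r k) * (to_fract q * x ^ k))"
    using arg_cong[OF r, of to_fract] by (simp add: c)
  also have "\<dots> = to_fract q * (\<Sum>k<N. to_fract (r k) * x ^ k)"
    by (simp add: sum_distrib_left algebra_simps)
  finally have xN: "x ^ N = (\<Sum>k<N. to_fract (r k) * x ^ k)" using q by simp
  define p where "p = monom (1::'b) N - (\<Sum>k<N. monom (r k) k)"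
  have cp: "coeff p i = (if i = N then 1 else 0) - (\<Sum>k<N. if k = i then r k else 0)" for i
    unfolding p_def by (simp add: coeff_sum coeff_monom)
  have cpN: "coeff p N = 1" using cp[of N] by simp
  have cpi: "coeff p i = 0" if "i > N" for i using cp[of i] that by auto
  have dp: "degree p = N"
    using le_degree[of p N] degree_le[of N p] cpN cpi by auto
  have lc: "lead_coeff p = 1" using dp cpN by simp
  have fp: "map_poly to_fract p = monom 1 N - (\<Sum>k<N. monom (to_fract (r k)) k)"
    by (rule poly_eqI) (simp add: coeff_map_poly cp coeff_sum coeff_monom)
  have "poly (map_poly to_fract p) x = 0"
    unfolding fp by (simp add: poly_sum poly_monom xN)
  then show ?thesis using norm lc unfolding normal_domain_def by blast
qed

lemma noeth_acc:
  fixes C :: "nat \<Rightarrow> 'b::comm_ring_1 set"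
  assumes noeth: "noetherian_ring TYPE('b)" and id: "\<And>n. ring_ideal (C n)"
    and mono: "\<And>n. C n \<subseteq> C (Suc n)"
  shows "\<exists>N. C (Suc N) \<subseteq> C N"
proof -
  have mono': "C m \<subseteq> C n" if "m \<le> n" for m n
    using that by (induction n) (auto simp: le_Suc_eq intro: mono[THEN subsetD])
  define J where "J = (\<Union>N. C N)"
  have Jid: "ring_ideal J"
    unfolding ring_ideal_def
  proof (intro conjI ballI allI)
    show "0 \<in> J" unfolding J_def using id unfolding ring_ideal_def by blast
  next
    fix y z assume "y \<in> J" "z \<in> J"
    then obtain N1 N2 where "y \<in> C N1" "z \<in> C N2" unfolding J_def by blast
    then have "y \<in> C (max N1 N2)" "z \<in> C (max N1 N2)" using mono'[of N1 "max N1 N2"] mono'[of N2 "max N1 N2"] by auto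
    then have "y + z \<in> C (max N1 N2)" using id unfolding ring_ideal_def by blast
    then show "y + z \<in> J" unfolding J_def by blast
  next
    fix s y assume "y \<in> J"
    then obtain N1 where "y \<in> C N1" unfolding J_def by blast
    then have "s * y \<in> C N1" using id unfolding ring_ideal_def by blast
    then show "s * y \<in> J" unfolding J_def by blast
  qed
  have "\<exists>F. finite F \<and> F \<subseteq> J \<and> J = {y. \<exists>r. y = (\<Sum>x\<in>F. r x * x)}"
    using noeth[unfolded noetherian_ring_def, rule_format, OF Jid] .
  then obtain F where F: "finite F" "F \<subseteq> J" "J = {y. \<exists>r. y = (\<Sum>x\<in>F. r x * x)}"
    by blast
  have "\<exists>N. F \<subseteq> C N" using F(1,2)
  proof (induction F rule: finite_induct)
    case empty then show ?case by simp
  next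
    case (insert g F)
    then obtain N where N: "F \<subseteq> C N" by auto
    obtain Ng where Ng: "g \<in> C Ng" using insert.prems unfolding J_def by blast
    have "F \<subseteq> C (max N Ng)" "g \<in> C (max N Ng)" using N Ng mono'[of N "max N Ng"] mono'[of Ng "max N Ng"] by auto
    then show ?case by blast
  qed
  then obtain N where N: "F \<subseteq> C N" by blast
  have JsubN: "J \<subseteq> C N"
  proof
    fix y assume "y \<in> J"
    then obtain r where "y = (\<Sum>x\<in>F. r x * x)" using F(3) by blast
    then show "y \<in> C N" using ideal_sum_closed[OF id F(1) N, of r] by simp
  qed
  then have "C (Suc N) \<subseteq> C N" unfolding J_def by blast
  then show ?thesis by blast
qed

lemma noeth_max:
  fixes \<F> :: "'b::comm_ring_1 set set"
  assumes noeth: "noetherian_ring TYPE('b)" and ne: "\<F> \<noteq> {}" and id: "\<forall>I\<in>\<F>. ring_ideal I"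
  shows "\<exists>P\<in>\<F>. \<forall>J\<in>\<F>. \<not> P \<subset> J"
proof (rule ccontr)
  assume "\<not> ?thesis"
  then have "\<forall>P\<in>\<F>. \<exists>J. J \<in> \<F> \<and> P \<subset> J" by blast
  then obtain nxt where nxt: "\<And>P. P \<in> \<F> \<Longrightarrow> nxt P \<in> \<F> \<and> P \<subset> nxt P" by metis
  obtain I0 where I0: "I0 \<in> \<F>" using ne by blast
  define C where "C n = (nxt ^^ n) I0" for n
  have CF: "C n \<in> \<F>" for n unfolding C_def by (induction n) (use I0 nxt in auto)
  have Cs: "C n \<subset> C (Suc n)" for n using nxt[OF CF[of n]] unfolding C_def by simp
  obtain N where "C (Suc N) \<subseteq> C N"
    using noeth_acc[OF noeth, of C] id CF Cs by blast
  then show False using Cs[of N] by blast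
qed

lemma prime_pow:
  assumes P: "prime_ideal P" and a: "a ^ n \<in> P" shows "a \<in> P"
  using a
proof (induction n)
  case 0
  then have "1 \<in> P" by simp
  then have "\<forall>r. r \<in> P" using P unfolding prime_ideal_def ring_ideal_def by (metis mult.right_neutral)
  then show ?case using P unfolding prime_ideal_def by blast
next
  case (Suc n)
  then show ?case using P unfolding prime_ideal_def by (metis power_Suc)
qed



lemma cond_main:
  fixes x :: "'b::idom fract" and f :: "'i \<Rightarrow> 'b"
  assumes noeth: "noetherian_ring TYPE('b)" and norm: "normal_domain TYPE('b)"
    and h1: "\<forall>P::'b set. height_one_prime P \<longrightarrow> \<not> (\<forall>i\<in>I. f i \<in> P)"
    and hx: "\<forall>i\<in>I. \<exists>n. to_fract (f i ^ n) * x \<in> range to_fract"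
  shows "x \<in> range to_fract"
proof (rule ccontr)
  assume xS: "x \<notin> range to_fract"
  define S where "S = range (to_fract :: 'b \<Rightarrow> 'b fract)"
  define cond where "cond z = {y. to_fract y * z \<in> S}" for z
  have condid: "ring_ideal (cond z)" for z
    unfolding ring_ideal_def
  proof (intro conjI ballI allI)
    show "0 \<in> cond z" unfolding cond_def S_def by (simp add: image_iff)
  next
    fix a b assume "a \<in> cond z" "b \<in> cond z"
    then obtain u v where "to_fract a * z = to_fract u" "to_fract b * z = to_fract v"
      unfolding cond_def S_def by auto
    then have "to_fract (a + b) * z = to_fract (u + v)" by (simp add: algebra_simps)
    then show "a + b \<in> cond z" unfolding cond_def S_def by (metis mem_Collect_eq rangeI)
  next
    fix r a assume "a \<in> cond z"
    then obtain u where "to_fract a * z = to_fract u" unfolding cond_def S_def by auto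
    then have "to_fract (r * a) * z = to_fract (r * u)" by (simp add: algebra_simps)
    then show "r * a \<in> cond z" unfolding cond_def S_def by (metis mem_Collect_eq rangeI)
  qed
  define FF where "FF = {cond (to_fract y * x) | y. to_fract y * x \<notin> S}"
  have "FF \<noteq> {}" unfolding FF_def using xS S_def by (auto intro!: exI[of _ 1])
  moreover have "\<forall>J\<in>FF. ring_ideal J" unfolding FF_def using condid by blast
  ultimately obtain P where "P \<in> FF" and Pmax: "\<forall>J\<in>FF. \<not> P \<subset> J"
    using noeth_max[OF noeth] by blast
  then obtain y0 where y0: "P = cond (to_fract y0 * x)" "to_fract y0 * x \<notin> S" unfolding FF_def by blast
  define x' where "x' = to_fract y0 * x"
  have Pc: "P = cond x'" "x' \<notin> S" using y0 x'_def by auto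
  have Pid: "ring_ideal P" using Pc condid by simp
  have Pmem: "a \<in> P \<longleftrightarrow> to_fract a * x' \<in> S" for a using Pc unfolding cond_def by simp
  have Smul: "u \<in> S \<Longrightarrow> v \<in> S \<Longrightarrow> u * v \<in> S" for u v
    unfolding S_def by (auto simp del: to_fract_mult simp add: to_fract_mult[symmetric])
  have toS: "to_fract a \<in> S" for a unfolding S_def by simp
  have one: "1 \<notin> P" using Pmem Pc by simp
  have prime: "prime_ideal P"
    unfolding prime_ideal_def
  proof (intro conjI allI impI)
    show "ring_ideal P" by (rule Pid)
    show "P \<noteq> UNIV" using one by blast
  next
    fix a b assume ab: "a * b \<in> P"
    show "a \<in> P \<or> b \<in> P"
    proof (cases "a \<in> P")
      case True then show ?thesis by blast
    next
      case False
      note a = False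
      define x'' where "x'' = to_fract a * x'"
      have "x'' \<notin> S" using a Pmem x''_def by simp
      moreover have "x'' = to_fract (a * y0) * x" unfolding x''_def x'_def by (simp add: mult.assoc)
      ultimately have "cond x'' \<in> FF" unfolding FF_def by blast
      moreover have "P \<subseteq> cond x''"
      proof
        fix y assume "y \<in> P"
        then have "to_fract y * x' \<in> S" using Pmem by blast
        then have "to_fract a * (to_fract y * x') \<in> S" using Smul toS by blast
        then show "y \<in> cond x''" unfolding cond_def x''_def by (simp add: algebra_simps)
      qed
      ultimately have "P = cond x''" using Pmax by blast
      moreover have "b \<in> cond x''" using ab Pmem unfolding cond_def x''_def by (simp add: algebra_simps)
      ultimately show ?thesis by simp
    qed
  qed
  have condxP: "cond x \<subseteq> P"
  proof
    fix y assume "y \<in> cond x"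
    then have "to_fract y * x \<in> S" unfolding cond_def by simp
    then have "to_fract y0 * (to_fract y * x) \<in> S" using Smul toS by blast
    then show "y \<in> P" using Pmem unfolding x'_def by (simp add: algebra_simps)
  qed
  have fP: "\<forall>i\<in>I. f i \<in> P"
  proof
    fix i assume "i \<in> I"
    then obtain n where "to_fract (f i ^ n) * x \<in> range to_fract" using hx by blast
    then have "f i ^ n \<in> cond x" unfolding cond_def S_def by simp
    then show "f i \<in> P" using condxP prime_pow[OF prime] by blast
  qed
  obtain c d where cd: "x' = Fract c d" "d \<noteq> 0" by (cases x') auto
  have "to_fract d * x' = to_fract c" using cd by (simp add: Fract_conv_to_fract)
  then have dP: "d \<in> P" using Pmem toS by simp
  have zero_prime: "prime_ideal ({0} :: 'b set)"
  proof -
    have "(1::'b) \<notin> {0}" by simp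
    then have "{0::'b} \<noteq> UNIV" by blast
    then show ?thesis unfolding prime_ideal_def ring_ideal_def by auto
  qed
  have noch: "\<not> (\<exists>Q0 Q1. prime_ideal Q0 \<and> prime_ideal Q1 \<and> Q0 \<subset> Q1 \<and> Q1 \<subset> P)"
  proof
    assume "\<exists>Q0 Q1. prime_ideal Q0 \<and> prime_ideal Q1 \<and> Q0 \<subset> Q1 \<and> Q1 \<subset> P"
    then obtain Q0 Q1 where Q: "prime_ideal Q0" "prime_ideal Q1" "Q0 \<subset> Q1" "Q1 \<subset> P" by blast
    obtain q where q: "q \<in> Q1" "q \<notin> Q0" using Q(3) by blast
    have "0 \<in> Q0" using Q(1) unfolding prime_ideal_def ring_ideal_def by blast
    then have q0: "q \<noteq> 0" using q by blast
    have Q1id: "ring_ideal Q1" using Q(2) unfolding prime_ideal_def by blast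
    have Q1pr: "\<And>a b. a * b \<in> Q1 \<Longrightarrow> a \<in> Q1 \<or> b \<in> Q1" using Q(2) unfolding prime_ideal_def by blast
    have key: "\<forall>n. to_fract q * x' ^ n \<in> range to_fract"
    proof (cases "\<forall>p\<in>P. \<exists>w\<in>P. to_fract p * x' = to_fract w")
      case True
      have "\<exists>w\<in>P. to_fract q * x' ^ n = to_fract w" for n
      proof (induction n)
        case 0 then show ?case using q Q(4) by auto
      next
        case (Suc n)
        then obtain w where w: "w \<in> P" "to_fract q * x' ^ n = to_fract w" by blast
        obtain w' where "w' \<in> P" "to_fract w * x' = to_fract w'" using True w by blast
        then show ?case using w by (metis mult.assoc power_Suc2)
      qed
      then show ?thesis by blast
    next
      case False
      then obtain p where p: "p \<in> P" and pw: "\<forall>w\<in>P. to_fract p * x' \<noteq> to_fract w" by blast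
      obtain u where u: "to_fract p * x' = to_fract u" using p Pmem unfolding S_def by auto
      have uP: "u \<notin> P" using pw u by blast
      have uQ: "u \<notin> Q1" using uP Q(4) by blast
      have pQ: "p \<notin> Q1"
      proof
        assume pQ: "p \<in> Q1"
        have "P \<subseteq> Q1"
        proof
          fix r assume "r \<in> P"
          then obtain w where w: "to_fract r * x' = to_fract w" using Pmem unfolding S_def by auto
          have "to_fract (u * r) = to_fract p * x' * to_fract r" using u by simp
          also have "\<dots> = to_fract p * (to_fract r * x')" by (simp add: ac_simps)
          also have "\<dots> = to_fract (p * w)" using w by simp
          finally have "to_fract (u * r) = to_fract (p * w)" .
          then have "u * r = p * w" by (simp only: to_fract_eq_iff)
          moreover have "p * w \<in> Q1" using pQ Q1id unfolding ring_ideal_def by (metis mult.commute)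
          ultimately show "r \<in> Q1" using Q1pr uQ by metis
        qed
        then show False using Q(4) by blast
      qed
      have "\<exists>w\<in>Q1. to_fract q * x' ^ n = to_fract w" for n
      proof (induction n)
        case 0 then show ?case using q by auto
      next
        case (Suc n)
        then obtain w where w: "w \<in> Q1" "to_fract q * x' ^ n = to_fract w" by blast
        have "w \<in> P" using w Q(4) by blast
        then obtain w' where w': "to_fract w * x' = to_fract w'" using Pmem unfolding S_def by auto
        have "to_fract (p * w') = to_fract p * (to_fract w * x')" using w' by simp
        also have "\<dots> = (to_fract p * x') * to_fract w" by (simp add: ac_simps)
        also have "\<dots> = to_fract (u * w)" using u by simp
        finally have "to_fract (p * w') = to_fract (u * w)" .
        then have "p * w' = u * w" by (simp only: to_fract_eq_iff)
        moreover have "u * w \<in> Q1" using w Q1id unfolding ring_ideal_def by blast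
        ultimately have "w' \<in> Q1" using Q1pr pQ by metis
        then show ?case using w w' by (metis mult.assoc power_Suc2)
      qed
      then show ?thesis by blast
    qed
    have "x' \<in> range to_fract" by (rule int_lemma[OF noeth norm q0 key])
    then show False using Pc S_def by simp
  qed
  have "height_one_prime P"
    unfolding height_one_prime_def
  proof (intro conjI)
    show "prime_ideal P" by (rule prime)
    show "\<exists>Q. prime_ideal Q \<and> Q \<subset> P"
      using zero_prime dP cd(2) Pid unfolding ring_ideal_def by blast
    show "\<not> (\<exists>Q0 Q1. prime_ideal Q0 \<and> prime_ideal Q1 \<and> Q0 \<subset> Q1 \<and> Q1 \<subset> P)" by (rule noch)
  qed
  then show False using h1 fP by blast
qed



lemma locz_subring:
  fixes R :: "'k::field set"
  assumes R: "is_subring R" and M: "M \<subseteq> R" "0 \<notin> M" and M1: "1 \<in> M"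
    and Mm: "\<forall>s\<in>M. \<forall>t\<in>M. s * t \<in> M"
  shows "is_subring (locz R M)"
proof -
  have Rc: "\<And>x y. x \<in> R \<Longrightarrow> y \<in> R \<Longrightarrow> x + y \<in> R \<and> x - y \<in> R \<and> x * y \<in> R"
    using R unfolding is_subring_def by blast
  have R01: "0 \<in> R" "1 \<in> R" using R unfolding is_subring_def by auto
  have lz: "a / s \<in> locz R M" if "a \<in> R" "s \<in> M" for a s unfolding locz_def using that by blast
  show ?thesis unfolding is_subring_def
  proof (intro conjI ballI)
    have "(0::'k) / 1 \<in> locz R M" "(1::'k) / 1 \<in> locz R M" using lz[OF R01(1) M1] lz[OF R01(2) M1] by -
    then show "0 \<in> locz R M" "1 \<in> locz R M" by simp_all
  next
    fix z1 z2 assume "z1 \<in> locz R M" "z2 \<in> locz R M"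
    then obtain a s b t where h: "a \<in> R" "s \<in> M" "z1 = a / s" "b \<in> R" "t \<in> M" "z2 = b / t"
      unfolding locz_def by blast
    have s0: "s \<noteq> 0" "t \<noteq> 0" "s \<in> R" "t \<in> R" using M h by auto
    have st: "s * t \<in> M" using Mm h by blast
    have at: "a * t \<in> R" "b * s \<in> R" "a * b \<in> R" using Rc h s0 by auto
    have "a * t + b * s \<in> R" "a * t - b * s \<in> R" using Rc at by auto
    moreover have "z1 + z2 = (a * t + b * s) / (s * t)" "z1 - z2 = (a * t - b * s) / (s * t)"
      "z1 * z2 = (a * b) / (s * t)" using h s0 by (simp_all add: field_simps)
    ultimately show "z1 + z2 \<in> locz R M" "z1 - z2 \<in> locz R M" "z1 * z2 \<in> locz R M"
      using st at lz by simp_all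
  qed
qed

lemma image_subring:
  assumes A: "is_subring (A :: 'b::idom set)" shows "is_subring (to_fract ` A)"
  unfolding is_subring_def
proof (intro conjI ballI)
  have "0 \<in> A" "1 \<in> A" using A unfolding is_subring_def by auto
  then show "0 \<in> to_fract ` A" "1 \<in> to_fract ` A" by (metis image_eqI to_fract_0, metis image_eqI to_fract_1)
next
  fix x y assume "x \<in> to_fract ` A" "y \<in> to_fract ` A"
  then obtain a b where ab: "a \<in> A" "b \<in> A" "x = to_fract a" "y = to_fract b" by blast
  have "a + b \<in> A" "a - b \<in> A" "a * b \<in> A" using A ab unfolding is_subring_def by auto
  then show "x + y \<in> to_fract ` A" "x - y \<in> to_fract ` A" "x * y \<in> to_fract ` A"
    using ab by (metis image_eqI to_fract_add, metis image_eqI to_fract_diff, metis image_eqI to_fract_mult)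
qed

lemma fract_repr: "\<exists>c d. d \<noteq> 0 \<and> (z :: 'b::idom fract) = to_fract c / to_fract d"
  by (cases z) (auto simp: Fract_conv_to_fract)

theorem lemma3p5:
  fixes A :: "'b::idom set" and I :: "'i set" and f :: "'i \<Rightarrow> 'b"
  assumes "noetherian_ring TYPE('b)"
    and "normal_domain TYPE('b)"
    and "is_subring A"
    and "EXT (frac_sub A) (UNIV :: 'b fract set)"
    and "\<forall>i\<in>I. f i \<in> A \<and> f i \<noteq> 0"
    and "\<forall>i\<in>I. EXT (loc_sub A (f i)) (loc_sub (UNIV :: 'b set) (f i))"
    and "\<forall>P::'b set. height_one_prime P \<longrightarrow> \<not> (\<forall>i\<in>I. f i \<in> P)"
  shows "EXT (to_fract ` A) (range (to_fract :: 'b \<Rightarrow> 'b fract))"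
proof -
  note noeth = assms(1) and norm = assms(2) and Asub = assms(3) and ext1 = assms(4)
    and fA = assms(5) and ext2 = assms(6) and h1 = assms(7)
  define R where "R = to_fract ` A"
  define S where "S = range (to_fract :: 'b \<Rightarrow> 'b fract)"
  have Rsub: "is_subring R" unfolding R_def by (rule image_subring[OF Asub])
  have Ssub: "is_subring S" unfolding S_def using image_subring[of "UNIV :: 'b set"]
    unfolding is_subring_def by simp
  have RS: "R \<subseteq> S" unfolding R_def S_def by blast
  define M1 where "M1 = R - {0}"
  have M1p: "M1 \<subseteq> R" "0 \<notin> M1" "1 \<in> M1" "\<forall>s\<in>M1. \<forall>t\<in>M1. s * t \<in> M1"
    using Rsub unfolding M1_def is_subring_def by auto
  have fracA: "frac_sub A = locz R M1"
  proof -
    have z: "\<And>s::'b. to_fract s \<noteq> 0 \<longleftrightarrow> s \<noteq> 0" by simp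
    show ?thesis unfolding frac_sub_def locz_def R_def M1_def
    proof (intro set_eqI iffI)
      fix x assume "x \<in> {to_fract a / to_fract s |a s. a \<in> A \<and> s \<in> A \<and> s \<noteq> 0}"
      then obtain a s where "x = to_fract a / to_fract s" "a \<in> A" "s \<in> A" "s \<noteq> 0" by blast
      then show "x \<in> {a / s |a s. a \<in> to_fract ` A \<and> s \<in> to_fract ` A - {0}}" using z by blast
    next
      fix x assume "x \<in> {a / s |a s. a \<in> to_fract ` A \<and> s \<in> to_fract ` A - {0}}"
      then obtain a s where "x = to_fract a / to_fract s" "a \<in> A" "s \<in> A" "to_fract s \<noteq> 0" by blast
      then show "x \<in> {to_fract a / to_fract s |a s. a \<in> A \<and> s \<in> A \<and> s \<noteq> 0}" using z by blast
    qed
  qed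
  define MS where "MS = S - {0}"
  have MSp: "MS \<subseteq> S" "0 \<notin> MS" "1 \<in> MS" "\<forall>s\<in>MS. \<forall>t\<in>MS. s * t \<in> MS"
    using Ssub unfolding MS_def is_subring_def by auto
  have univ: "locz L (L - {0}) = UNIV" if "S \<subseteq> L" for L
  proof -
    { fix z :: "'b fract"
      obtain c d where "d \<noteq> 0" "z = to_fract c / to_fract d" using fract_repr by blast
      moreover have "to_fract c \<in> L" "to_fract d \<in> L" using that unfolding S_def by auto
      moreover have "to_fract d \<noteq> 0" using \<open>d \<noteq> 0\<close> by simp
      ultimately have "z \<in> locz L (L - {0})" unfolding locz_def by blast }
    then show ?thesis by blast
  qed
  define Mf where "Mf g = range (\<lambda>n::nat. (to_fract g :: 'b fract) ^ n)" for g :: 'b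
  have Mfp: "Mf g \<subseteq> T" "0 \<notin> Mf g" "1 \<in> Mf g" "\<forall>s\<in>Mf g. \<forall>t\<in>Mf g. s * t \<in> Mf g"
    if T: "is_subring T" "to_fract g \<in> T" and g0: "g \<noteq> 0" for g T
  proof -
    have "to_fract g ^ n \<in> T" for n
      by (induction n) (use T in \<open>auto simp: is_subring_def\<close>)
    then show "Mf g \<subseteq> T" unfolding Mf_def by blast
    show "0 \<notin> Mf g" unfolding Mf_def using g0 by auto
    show "1 \<in> Mf g" unfolding Mf_def by (metis power_0 rangeI)
    show "\<forall>s\<in>Mf g. \<forall>t\<in>Mf g. s * t \<in> Mf g"
    proof (intro ballI)
      fix s t assume "s \<in> Mf g" "t \<in> Mf g"
      then obtain m n where "s = to_fract g ^ m" "t = to_fract g ^ n" unfolding Mf_def by blast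
      then have "s * t = to_fract g ^ (m + n)" by (simp add: power_add)
      then show "s * t \<in> Mf g" unfolding Mf_def by blast
    qed
  qed
  have locG: "loc_sub X g = locz (to_fract ` X) (Mf g)" for g and X :: "'b set"
    unfolding loc_sub_def locz_def Mf_def
  proof (intro set_eqI iffI)
    fix x assume "x \<in> {to_fract a / to_fract g ^ n |a n. a \<in> X}"
    then obtain a n where "x = to_fract a / to_fract g ^ n" "a \<in> X" by blast
    then show "x \<in> {a / s |a s. a \<in> to_fract ` X \<and> s \<in> range (\<lambda>n. to_fract g ^ n)}" by blast
  next
    fix x assume "x \<in> {a / s |a s. a \<in> to_fract ` X \<and> s \<in> range (\<lambda>n. to_fract g ^ n)}"
    then obtain a n where "x = to_fract a / to_fract g ^ n" "a \<in> X" by blast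
    then show "x \<in> {to_fract a / to_fract g ^ n |a n. a \<in> X}" by blast
  qed
  have locA: "loc_sub A g = locz R (Mf g)" for g unfolding R_def by (rule locG)
  have locB: "loc_sub (UNIV :: 'b set) g = locz S (Mf g)" for g unfolding S_def by (rule locG)
  show ?thesis unfolding EXT_def R_def[symmetric] S_def[symmetric]
  proof (intro allI impI)
    fix \<delta> assume \<delta>: "is_derivation R \<delta>"
    define \<delta>1 where "\<delta>1 = extd R M1 \<delta>"
    have d1: "is_derivation (frac_sub A) \<delta>1" "\<forall>a\<in>R. \<delta>1 a = \<delta> a"
      unfolding \<delta>1_def fracA using extd_der[OF Rsub \<delta> M1p] by auto
    obtain D where D: "is_derivation UNIV D" "\<forall>x\<in>frac_sub A. D x = \<delta>1 x"
      and Du0: "\<forall>D'. is_derivation UNIV D' \<and> (\<forall>x\<in>frac_sub A. D' x = \<delta>1 x) \<longrightarrow> (\<forall>x\<in>UNIV. D' x = D x)"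
      using ext1[unfolded EXT_def, rule_format, OF d1(1)] by (elim exE conjE) 
    have Du: "\<And>D'. is_derivation UNIV D' \<Longrightarrow> (\<forall>x\<in>frac_sub A. D' x = \<delta>1 x) \<Longrightarrow> (\<forall>x. D' x = D x)"
      using Du0 by blast
    have agree: "\<forall>x. E x = D x" if E: "is_derivation UNIV E" "\<forall>a\<in>R. E a = \<delta> a" for E
    proof (rule Du[OF E(1)], intro ballI)
      fix z assume "z \<in> frac_sub A"
      then obtain a s where h: "a \<in> R" "s \<in> M1" "z = a / s" unfolding fracA locz_def by blast
      have s0: "s \<noteq> 0" "s \<in> R" using h M1p by auto
      have sz: "s * z = a" unfolding h(3) using s0(1) by simp
      have "E z = (E (s * z) - z * E s) / s" by (rule der_quot'[OF E(1) UNIV_I UNIV_I s0(1)])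
      also have "\<dots> = (E a - z * E s) / s" by (simp only: sz)
      also have "\<dots> = (\<delta> a - z * \<delta> s) / s" using E(2) h(1) s0(2) by simp
      also have "\<dots> = \<delta>1 z" unfolding \<delta>1_def by (rule extd_eq[OF Rsub \<delta> M1p(1,2) h, symmetric])
      finally show "E z = \<delta>1 z" .
    qed
    have DR: "\<forall>a\<in>R. D a = \<delta> a"
    proof
      fix a assume a: "a \<in> R"
      have "a \<in> frac_sub A" unfolding fracA locz_def using a M1p by (metis (mono_tags, lifting) div_by_1 mem_Collect_eq)
      then show "D a = \<delta> a" using D(2) d1(2) a by simp
    qed
    have DS: "D x \<in> S" if x: "x \<in> S" for x
    proof -
      have loc: "\<forall>i\<in>I. \<exists>n. to_fract (f i ^ n) * D x \<in> range to_fract"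
      proof
        fix i assume i: "i \<in> I"
        let ?g = "f i"
        have g: "?g \<in> A" "?g \<noteq> 0" using fA i by auto
        have gR: "to_fract ?g \<in> R" unfolding R_def using g by blast
        have gS: "to_fract ?g \<in> S" unfolding S_def by blast
        note MR = Mfp[OF Rsub gR g(2)]
        note MSf = Mfp[OF Ssub gS g(2)]
        define \<delta>2 where "\<delta>2 = extd R (Mf ?g) \<delta>"
        have d2: "is_derivation (loc_sub A ?g) \<delta>2" "\<forall>a\<in>R. \<delta>2 a = \<delta> a"
          unfolding \<delta>2_def locA using extd_der[OF Rsub \<delta> MR] by auto
        define L where "L = loc_sub (UNIV :: 'b set) ?g"
        have Lsub: "is_subring L" unfolding L_def locB by (rule locz_subring[OF Ssub MSf])
        have SL: "S \<subseteq> L"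
        proof
          fix y assume "y \<in> S"
          moreover have "1 \<in> Mf ?g" using MSf by blast
          ultimately have "y / 1 \<in> L" unfolding L_def locB locz_def by blast
          then show "y \<in> L" by simp
        qed
        have RL: "loc_sub A ?g \<subseteq> L" unfolding L_def locA locB locz_def using RS by blast
        have "EXT (loc_sub A ?g) L" using ext2 i unfolding L_def by blast
        from this[unfolded EXT_def, rule_format, OF d2(1)]
        obtain Di where Di: "is_derivation L Di" "\<forall>y\<in>loc_sub A ?g. Di y = \<delta>2 y"
          by (elim exE conjE)
        have LMp: "L - {0} \<subseteq> L" "0 \<notin> L - {0}" "1 \<in> L - {0}" "\<forall>s\<in>L - {0}. \<forall>t\<in>L - {0}. s * t \<in> L - {0}"
          using Lsub unfolding is_subring_def by auto
        define Ei where "Ei = extd L (L - {0}) Di"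
        have Ei: "is_derivation UNIV Ei" "\<forall>y\<in>L. Ei y = Di y"
          unfolding Ei_def using extd_der[OF Lsub Di(1) LMp] univ[OF SL] by auto
        have RA: "R \<subseteq> loc_sub A ?g"
        proof
          fix y assume "y \<in> R"
          moreover have "1 \<in> Mf ?g" using MR by blast
          ultimately have "y / 1 \<in> loc_sub A ?g" unfolding locA locz_def by blast
          then show "y \<in> loc_sub A ?g" by simp
        qed
        have "\<forall>a\<in>R. Ei a = \<delta> a"
        proof
          fix a assume a: "a \<in> R"
          then have "a \<in> loc_sub A ?g" using RA by blast
          then show "Ei a = \<delta> a" using Ei(2) Di(2) d2(2) a RL by auto
        qed
        then have EiD: "\<forall>y. Ei y = D y" using agree Ei(1) by blast
        have "x \<in> L" using x SL by blast
        then have "D x = Di x" using EiD Ei(2) by metis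
        moreover have "Di x \<in> L" using Di(1) \<open>x \<in> L\<close> unfolding is_derivation_def by blast
        ultimately have "D x \<in> L" by simp
        then obtain c n where cn: "D x = to_fract c / to_fract ?g ^ n" unfolding L_def loc_sub_def by blast
        have gn: "to_fract ?g ^ n \<noteq> 0" using g(2) by simp
        have "to_fract (?g ^ n) * D x = to_fract ?g ^ n * (to_fract c / to_fract ?g ^ n)"
        proof -
          have "to_fract (?g ^ n) = to_fract ?g ^ n" by (induction n) simp_all
          then show ?thesis unfolding cn by simp
        qed
        also have "\<dots> = to_fract c" using gn by simp
        finally have "to_fract (?g ^ n) * D x = to_fract c" .
        then show "\<exists>n. to_fract (?g ^ n) * D x \<in> range to_fract" by (metis rangeI)
      qed
      show ?thesis unfolding S_def by (rule cond_main[OF noeth norm h1 loc])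
    qed
    show "\<exists>D. is_derivation S D \<and> (\<forall>x\<in>R. D x = \<delta> x) \<and>
        (\<forall>D'. is_derivation S D' \<and> (\<forall>x\<in>R. D' x = \<delta> x) \<longrightarrow> (\<forall>x\<in>S. D' x = D x))"
    proof (intro exI conjI allI impI)
      show "is_derivation S D" using D(1) DS unfolding is_derivation_def by blast
      show "\<forall>x\<in>R. D x = \<delta> x" by (rule DR)
    next
      fix D' assume D': "is_derivation S D' \<and> (\<forall>x\<in>R. D' x = \<delta> x)"
      define E where "E = extd S MS D'"
      have E: "is_derivation UNIV E" "\<forall>y\<in>S. E y = D' y"
        unfolding E_def MS_def using extd_der[OF Ssub _ MSp[unfolded MS_def]] D' univ[of S] by auto
      have "\<forall>a\<in>R. E a = \<delta> a" using E(2) D' RS by auto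
      then have "\<forall>y. E y = D y" using agree E(1) by blast
      then show "\<forall>x\<in>S. D' x = D x" using E(2) by metis
    qed
  qed
qed

end
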